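(* For every infinite computable set $R$, the cost function $\mathbf c_{\Omega,R}$ is benign.
   Context: $\Omega$: fixed left-c.e. ML-random real with computable increasing rational approximations $\Omega_s$. $k_s(n)=\lfloor-\log_2(\Omega_s-\Omega_n)\rfloor$; $\mathbf c_{\Omega,R}(n,s)=2^{-|R\cap k_s(n)|}$ with $R\cap m=R\cap\{0,\dots,m-1\}$. A cost function $\mathbf c$ is benign if there is a computable function $g$ such that for every rational $\epsilon>0$, every sequence $n_1<s_1\le n_2<s_2\le\cdots\le n_\ell<s_\ell$ with $\mathbf c(n_i,s_i)\ge\epsilon$ for all $i\le\ell$ has $\ell\le g(\epsilon)$. *)

theory Defs
  imports "HOL-Analysis.Analysis" "HOL-Library.Nat_Bijection"
begin

datatype recf = Zero | Succ | Proj nat | Comp recf "recf list" | Prim recf recf | Mu recf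

inductive eval :: "recf \<Rightarrow> nat list \<Rightarrow> nat \<Rightarrow> bool" where
  eval_Zero: "eval Zero xs 0"
| eval_Succ: "eval Succ (x # xs) (Suc x)"
| eval_Proj: "i < length xs \<Longrightarrow> eval (Proj i) xs (xs ! i)"
| eval_Comp: "length ys = length gs \<Longrightarrow> (\<forall>i < length gs. eval (gs ! i) xs (ys ! i))
              \<Longrightarrow> eval f ys z \<Longrightarrow> eval (Comp f gs) xs z"
| eval_Prim0: "eval f xs y \<Longrightarrow> eval (Prim f g) (0 # xs) y"
| eval_PrimS: "eval (Prim f g) (n # xs) y \<Longrightarrow> eval g (n # y # xs) z
              \<Longrightarrow> eval (Prim f g) (Suc n # xs) z"
| eval_Mu: "eval f (y # xs) 0 \<Longrightarrow> (\<forall>z < y. \<exists>v. eval f (z # xs) v \<and> v \<noteq> 0)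
              \<Longrightarrow> eval (Mu f) xs y"

definition computable :: "(nat \<Rightarrow> nat) \<Rightarrow> bool" where
  "computable f \<longleftrightarrow> (\<exists>c. \<forall>x. eval c [x] (f x))"

definition computable_set :: "nat set \<Rightarrow> bool" where
  "computable_set A \<longleftrightarrow> computable (\<lambda>x. if x \<in> A then 1 else 0)"

definition ce_set :: "nat set \<Rightarrow> bool" where
  "ce_set A \<longleftrightarrow> (\<exists>c. \<forall>x. x \<in> A \<longleftrightarrow> (\<exists>y. eval c [x] y))"

definition computable_rat_seq :: "(nat \<Rightarrow> rat) \<Rightarrow> bool" where
  "computable_rat_seq r \<longleftrightarrow> (\<exists>p q d. computable p \<and> computable q \<and> computable d \<and>
     (\<forall>s. d s > 0 \<and> r s = (of_nat (p s) - of_nat (q s)) / of_nat (d s)))"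

definition computable_rat_fun :: "(rat \<Rightarrow> nat) \<Rightarrow> bool" where
  "computable_rat_fun g \<longleftrightarrow> (\<exists>h. computable h \<and>
     (\<forall>a b. b > 0 \<longrightarrow> g (of_nat a / of_nat b) = h (prod_encode (a, b))))"

text \<open>Codes of dyadic intervals [a/2^k, (a+1)/2^k), a integer.\<close>
definition dyadic_interval :: "nat \<Rightarrow> real set" where
  "dyadic_interval c = (case prod_decode c of (k, a) \<Rightarrow>
      {of_int (int_decode a) / 2 ^ k ..< (of_int (int_decode a) + 1) / 2 ^ k})"

text \<open>The n-th level of the test given by a c.e. set W of codes of pairs (n, interval).\<close>
definition test_level :: "nat set \<Rightarrow> nat \<Rightarrow> real set" where
  "test_level W n = \<Union> {dyadic_interval c | c. prod_encode (n, c) \<in> W}"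

definition mltest :: "nat set \<Rightarrow> bool" where
  "mltest W \<longleftrightarrow> ce_set W \<and>
     (\<forall>n. emeasure lborel (test_level W n) \<le> ennreal ((1/2) ^ n))"

definition ml_random :: "real \<Rightarrow> bool" where
  "ml_random x \<longleftrightarrow> (\<forall>W. mltest W \<longrightarrow> (\<exists>n. x \<notin> test_level W n))"

definition left_ce_approx :: "(nat \<Rightarrow> rat) \<Rightarrow> real \<Rightarrow> bool" where
  "left_ce_approx r x \<longleftrightarrow> computable_rat_seq r \<and> strict_mono r \<and>
     (\<lambda>s. real_of_rat (r s)) \<longlonglongrightarrow> x"

definition kfun :: "(nat \<Rightarrow> rat) \<Rightarrow> nat \<Rightarrow> nat \<Rightarrow> int" where
  "kfun r n s = \<lfloor>- log 2 (real_of_rat (r s - r n))\<rfloor>"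

text \<open>R \<inter> m = R \<inter> {0..m-1}; for negative k this is empty, hence nat k.\<close>
definition cost_OmegaR :: "(nat \<Rightarrow> rat) \<Rightarrow> nat set \<Rightarrow> nat \<Rightarrow> nat \<Rightarrow> real" where
  "cost_OmegaR r R n s = (1/2) ^ card (R \<inter> {..< nat (kfun r n s)})"

definition benign :: "(nat \<Rightarrow> nat \<Rightarrow> real) \<Rightarrow> bool" where
  "benign c \<longleftrightarrow> (\<exists>g. computable_rat_fun g \<and>
     (\<forall>\<epsilon>::rat. \<epsilon> > 0 \<longrightarrow> (\<forall>(l::nat) ns ss.
        (\<forall>i<l. ns i < ss i) \<and> (\<forall>i. Suc i < l \<longrightarrow> ss i \<le> ns (Suc i)) \<and>
        (\<forall>i<l. c (ns i) (ss i) \<ge> real_of_rat \<epsilon>) \<longrightarrow> l \<le> g \<epsilon>)))"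

end

theory Submission
  imports Defs
begin


definition rc :: "nat \<Rightarrow> (nat list \<Rightarrow> nat) \<Rightarrow> bool" where
  "rc k F \<longleftrightarrow> (\<exists>c. \<forall>xs. length xs = k \<longrightarrow> eval c xs (F xs))"

lemma rc_cong: "rc k F \<Longrightarrow> k = k' \<Longrightarrow> (\<And>xs. length xs = k \<Longrightarrow> F xs = G xs) \<Longrightarrow> rc k' G"
  unfolding rc_def by metis

lemma rc_zero: "rc k (\<lambda>_. 0)"
  unfolding rc_def using eval_Zero by blast

lemma rc_proj: "i < k \<Longrightarrow> rc k (\<lambda>xs. xs ! i)"
  unfolding rc_def using eval_Proj by metis

lemma rc_succ1: "rc 1 (\<lambda>xs. Suc (xs ! 0))"
  unfolding rc_def
  by (rule exI[of _ Succ]) (auto simp: length_Suc_conv intro: eval_Succ)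

lemma rc_comp1:
  assumes "rc 1 (\<lambda>xs. f (xs ! 0))" "rc k F"
  shows "rc k (\<lambda>xs. f (F xs))"
proof -
  obtain cg where g: "\<forall>xs. length xs = 1 \<longrightarrow> eval cg xs (f (xs ! 0))" using assms(1) rc_def by auto
  obtain cf where f: "\<forall>xs. length xs = k \<longrightarrow> eval cf xs (F xs)" using assms(2) rc_def by auto
  show ?thesis unfolding rc_def
  proof (intro exI allI impI)
    fix xs :: "nat list" assume "length xs = k"
    then show "eval (Comp cg [cf]) xs (f (F xs))"
      using g[rule_format, of "[F xs]"] f by (intro eval_Comp[where ys="[F xs]"]) auto
  qed
qed

lemma rc_comp2:
  assumes "rc 2 (\<lambda>xs. f (xs ! 0) (xs ! 1))" "rc k F" "rc k G"
  shows "rc k (\<lambda>xs. f (F xs) (G xs))"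
proof -
  obtain cg where g: "\<forall>xs. length xs = 2 \<longrightarrow> eval cg xs (f (xs ! 0) (xs ! 1))" using assms(1) rc_def by auto
  obtain cf where f: "\<forall>xs. length xs = k \<longrightarrow> eval cf xs (F xs)" using assms(2) rc_def by auto
  obtain ch where h: "\<forall>xs. length xs = k \<longrightarrow> eval ch xs (G xs)" using assms(3) rc_def by auto
  show ?thesis unfolding rc_def
  proof (intro exI allI impI)
    fix xs :: "nat list" assume "length xs = k"
    then show "eval (Comp cg [cf, ch]) xs (f (F xs) (G xs))"
      using g[rule_format, of "[F xs, G xs]"] f h by (intro eval_Comp[where ys="[F xs, G xs]"]) (auto simp: less_Suc_eq)
  qed
qed

lemma rc_prim:
  assumes "rc k B" "rc k2 S" "k2 = Suc (Suc k)" "k1 = Suc k"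
    and "\<And>ys. P 0 ys = B ys" "\<And>n ys. P (Suc n) ys = S (n # P n ys # ys)"
  shows "rc k1 (\<lambda>xs. P (hd xs) (tl xs))"
proof -
  obtain cb where b: "\<forall>xs. length xs = k \<longrightarrow> eval cb xs (B xs)" using assms(1) rc_def by auto
  obtain cs where s: "\<forall>xs. length xs = Suc (Suc k) \<longrightarrow> eval cs xs (S xs)" using assms(2,3) rc_def by auto
  have *: "length ys = k \<Longrightarrow> eval (Prim cb cs) (n # ys) (P n ys)" for n ys
  proof (induction n)
    case 0 then show ?case using b assms(5) by (auto intro: eval_Prim0)
  next
    case (Suc n) then show ?case using s assms(6) by (auto intro: eval_PrimS)
  qed
  show ?thesis unfolding rc_def assms(4)
    by (rule exI[of _ "Prim cb cs"]) (auto simp: length_Suc_conv intro: *)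
qed

lemma rc_mu:
  assumes "rc (Suc k) F" "\<And>xs. length xs = k \<Longrightarrow> \<exists>y. F (y # xs) = 0"
  shows "rc k (\<lambda>xs. LEAST y. F (y # xs) = 0)"
proof -
  obtain cf where f: "\<forall>xs. length xs = Suc k \<longrightarrow> eval cf xs (F xs)" using assms(1) rc_def by auto
  show ?thesis unfolding rc_def
  proof (intro exI allI impI)
    fix xs :: "nat list" assume l: "length xs = k"
    obtain y0 where "F (y0 # xs) = 0" using assms(2)[OF l] by auto
    then have "F ((LEAST y. F (y # xs) = 0) # xs) = 0" by (rule LeastI)
    then have e0: "eval cf ((LEAST y. F (y # xs) = 0) # xs) 0"
      using f[rule_format, of "(LEAST y. F (y # xs) = 0) # xs"] l by simp
    have e1: "\<forall>z < (LEAST y. F (y # xs) = 0). \<exists>v. eval cf (z # xs) v \<and> v \<noteq> 0"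
    proof (intro allI impI)
      fix z assume "z < (LEAST y. F (y # xs) = 0)"
      then have "F (z # xs) \<noteq> 0" by (rule not_less_Least)
      moreover have "eval cf (z # xs) (F (z # xs))" using f l by simp
      ultimately show "\<exists>v. eval cf (z # xs) v \<and> v \<noteq> 0" by blast
    qed
    show "eval (Mu cf) xs (LEAST y. F (y # xs) = 0)" by (rule eval_Mu[OF e0 e1])
  qed
qed

lemma rc_const: "rc k (\<lambda>_. c)"
proof (induction c)
  case 0 then show ?case by (rule rc_zero)
next
  case (Suc c) then show ?case using rc_comp1[OF rc_succ1, of k "\<lambda>_. c"] by simp
qed

lemma rc_add: "rc k F \<Longrightarrow> rc k G \<Longrightarrow> rc k (\<lambda>xs. F xs + G xs)"
proof -
  have S: "rc 3 (\<lambda>xs. Suc (xs ! 1))" by (rule rc_comp1[OF rc_succ1], rule rc_proj, simp)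
  have "rc 2 (\<lambda>xs. (\<lambda>n ys. n + ys ! 0) (hd xs) (tl xs))"
    by (rule rc_prim[OF rc_proj S]) auto
  then have "rc 2 (\<lambda>xs. xs ! 0 + xs ! 1)"
    by (rule rc_cong) (auto simp: length_Suc_conv numeral_2_eq_2)
  then show "rc k F \<Longrightarrow> rc k G \<Longrightarrow> rc k (\<lambda>xs. F xs + G xs)" by (rule rc_comp2)
qed

lemma rc_mult: "rc k F \<Longrightarrow> rc k G \<Longrightarrow> rc k (\<lambda>xs. F xs * G xs)"
proof -
  have S: "rc 3 (\<lambda>xs. xs ! 2 + xs ! 1)" by (rule rc_add; rule rc_proj; simp)
  have "rc 2 (\<lambda>xs. (\<lambda>n ys. n * ys ! 0) (hd xs) (tl xs))"
    by (rule rc_prim[OF rc_zero S]) auto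
  then have "rc 2 (\<lambda>xs. xs ! 0 * xs ! 1)"
    by (rule rc_cong) (auto simp: length_Suc_conv numeral_2_eq_2)
  then show "rc k F \<Longrightarrow> rc k G \<Longrightarrow> rc k (\<lambda>xs. F xs * G xs)" by (rule rc_comp2)
qed

lemma rc_pred: "rc 1 (\<lambda>xs. xs ! 0 - 1)"
proof -
  have S: "rc 2 (\<lambda>xs. xs ! 0)" by (rule rc_proj) simp
  have "rc 1 (\<lambda>xs. (\<lambda>n (ys::nat list). n - 1) (hd xs) (tl xs))"
    by (rule rc_prim[OF rc_zero S]) auto
  then show ?thesis by (rule rc_cong) (auto simp: length_Suc_conv)
qed

lemma rc_sub: "rc k F \<Longrightarrow> rc k G \<Longrightarrow> rc k (\<lambda>xs. F xs - G xs)"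
proof -
  have S: "rc 3 (\<lambda>xs. xs ! 1 - 1)" by (rule rc_comp1[OF rc_pred], rule rc_proj, simp)
  have "rc 2 (\<lambda>xs. (\<lambda>n ys. ys ! 0 - n) (hd xs) (tl xs))"
    by (rule rc_prim[OF rc_proj S]) auto
  then have "rc 2 (\<lambda>xs. (\<lambda>a b. b - a) (xs ! 0) (xs ! 1))"
    by (rule rc_cong) (auto simp: length_Suc_conv numeral_2_eq_2)
  then show "rc k F \<Longrightarrow> rc k G \<Longrightarrow> rc k (\<lambda>xs. F xs - G xs)"
    using rc_comp2[of "\<lambda>a b. b - a" k G F] by simp
qed

lemma rc_pow2: "rc k F \<Longrightarrow> rc k (\<lambda>xs. 2 ^ F xs)"
proof -
  have S: "rc 2 (\<lambda>xs. xs ! 1 + xs ! 1)" by (rule rc_add; rule rc_proj; simp)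
  have "rc 1 (\<lambda>xs. (\<lambda>n (ys::nat list). (2::nat) ^ n) (hd xs) (tl xs))"
    by (rule rc_prim[OF rc_const S]) auto
  then have "rc 1 (\<lambda>xs. 2 ^ (xs ! 0))" by (rule rc_cong) (auto simp: length_Suc_conv)
  then show "rc k F \<Longrightarrow> rc k (\<lambda>xs. 2 ^ F xs)" by (rule rc_comp1)
qed

lemma rc_tri: "rc k F \<Longrightarrow> rc k (\<lambda>xs. triangle (F xs))"
proof -
  have S: "rc 2 (\<lambda>xs. xs ! 1 + Suc (xs ! 0))"
    by (rule rc_add, rule rc_proj, simp, rule rc_comp1[OF rc_succ1], rule rc_proj, simp)
  have "rc 1 (\<lambda>xs. (\<lambda>n (ys::nat list). triangle n) (hd xs) (tl xs))"
    by (rule rc_prim[OF rc_zero S]) auto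
  then have "rc 1 (\<lambda>xs. triangle (xs ! 0))" by (rule rc_cong) (auto simp: length_Suc_conv)
  then show "rc k F \<Longrightarrow> rc k (\<lambda>xs. triangle (F xs))" by (rule rc_comp1)
qed

lemma rc_cnt:
  assumes "computable_set R"
  shows "rc k F \<Longrightarrow> rc k (\<lambda>xs. card (R \<inter> {..< F xs}))"
proof -
  obtain c where c: "\<forall>x. eval c [x] (if x \<in> R then 1 else 0)"
    using assms unfolding computable_set_def computable_def by auto
  have ch: "rc 1 (\<lambda>xs. (\<lambda>x. if x \<in> R then 1 else 0) (xs ! 0))"
    unfolding rc_def
  proof (intro exI allI impI)
    fix xs :: "nat list" assume "length xs = 1"
    then obtain x where "xs = [x]" by (auto simp: length_Suc_conv)
    then show "eval c xs ((\<lambda>x. if x \<in> R then 1 else 0) (xs ! 0))" using c by simp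
  qed
  have eq: "card (R \<inter> {..< Suc n}) = card (R \<inter> {..<n}) + (if n \<in> R then 1 else 0)" for n
  proof -
    have "R \<inter> {..< Suc n} = (if n \<in> R then insert n (R \<inter> {..<n}) else R \<inter> {..<n})"
      by (auto simp: less_Suc_eq)
    then show ?thesis by auto
  qed
  have S: "rc 2 (\<lambda>xs. xs ! 1 + (\<lambda>x. if x \<in> R then 1 else 0) (xs ! 0))"
    by (rule rc_add, rule rc_proj, simp, rule rc_comp1[OF ch], rule rc_proj, simp)
  have "rc 1 (\<lambda>xs. (\<lambda>n (ys::nat list). card (R \<inter> {..<n})) (hd xs) (tl xs))"
    by (rule rc_prim[OF rc_zero S]) (auto simp: eq)
  then have "rc 1 (\<lambda>xs. card (R \<inter> {..< xs ! 0}))" by (rule rc_cong) (auto simp: length_Suc_conv)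
  then show "rc k F \<Longrightarrow> rc k (\<lambda>xs. card (R \<inter> {..< F xs}))" by (rule rc_comp1)
qed



definition cnt :: "nat set \<Rightarrow> nat \<Rightarrow> nat" where "cnt R t = card (R \<inter> {..<t})"
definition TT :: "nat set \<Rightarrow> nat \<Rightarrow> nat" where "TT R N = (LEAST t. Suc N - cnt R t = 0)"
definition s1 :: "nat \<Rightarrow> nat" where "s1 z = (LEAST t. Suc z - triangle t = 0)"
definition fstd :: "nat \<Rightarrow> nat" where "fstd z = z - triangle (s1 z - 1)"
definition sndd :: "nat \<Rightarrow> nat" where "sndd z = (s1 z - 1) - fstd z"
definition Nq :: "nat \<Rightarrow> nat \<Rightarrow> nat" where "Nq a b = (LEAST q. a * (Suc b - a * Suc q) = 0)"

lemma triangle_ge: "n \<le> triangle n"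
  by (induction n) auto

lemma triangle_mono: "m \<le> n \<Longrightarrow> triangle m \<le> triangle n"
  by (induction n) (auto simp: le_Suc_eq)

lemma cnt_mono: "m \<le> n \<Longrightarrow> cnt R m \<le> cnt R n"
  unfolding cnt_def by (rule card_mono) auto

lemma cnt_unbounded:
  assumes "infinite R" shows "\<exists>t. N < cnt R t"
proof -
  obtain B where B: "B \<subseteq> R" "finite B" "card B = Suc N"
    using infinite_arbitrarily_large[OF assms] by blast
  then have ne: "B \<noteq> {}" by auto
  have "B \<subseteq> R \<inter> {..< Suc (Max B)}"
    using B Max_ge[OF B(2)] by (auto simp: less_Suc_eq_le)
  then have "card B \<le> cnt R (Suc (Max B))" unfolding cnt_def by (rule card_mono[rotated]) auto
  then show ?thesis using B by (intro exI[of _ "Suc (Max B)"]) simp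
qed

lemma TT_prop: "infinite R \<Longrightarrow> N < cnt R (TT R N)"
proof -
  assume "infinite R"
  then obtain t where "N < cnt R t" using cnt_unbounded by blast
  then have "Suc N - cnt R t = 0" by simp
  then have "Suc N - cnt R (TT R N) = 0" unfolding TT_def by (rule LeastI)
  then show ?thesis by simp
qed

lemma s1_enc: "s1 (triangle (a + b) + a) = Suc (a + b)"
  unfolding s1_def
proof (rule Least_equality)
  show "Suc (triangle (a + b) + a) - triangle (Suc (a + b)) = 0" by simp
next
  fix y assume "Suc (triangle (a + b) + a) - triangle y = 0"
  then have "triangle (a+b) < triangle y" by simp
  then show "Suc (a + b) \<le> y" using triangle_mono[of y "a+b"] by (metis not_less_eq_eq not_le)
qed

lemma dec_enc: "fstd (prod_encode (a, b)) = a" "sndd (prod_encode (a, b)) = b"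
  by (auto simp: fstd_def sndd_def prod_encode_def s1_enc)

lemma Nq_eq: "Nq a b = nat \<lfloor>of_nat b / of_nat a :: rat\<rfloor>"
proof (cases "a = 0")
  case True then show ?thesis by (simp add: Nq_def)
next
  case False
  have "Nq a b = b div a" unfolding Nq_def
  proof (rule Least_equality)
    have "b < a * Suc (b div a)" using False
      by (metis add.commute div_mult_mod_eq mod_less_divisor mult.commute mult_Suc_right nat_add_left_cancel_less not_gr0)
    then show "a * (Suc b - a * Suc (b div a)) = 0" by simp
  next
    fix y assume "a * (Suc b - a * Suc y) = 0"
    then have "b < a * Suc y" using False by simp
    then show "b div a \<le> y" using False
      by (metis less_Suc_eq_le less_mult_imp_div_less mult.commute)
  qed
  then show ?thesis by (simp add: floor_divide_of_nat_eq)
qed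

lemma rc_s1: "rc 1 (\<lambda>xs. s1 (xs ! 0))"
proof -
  have F: "rc 2 (\<lambda>ys. Suc (ys ! 1) - triangle (ys ! 0))"
    by (rule rc_sub, rule rc_comp1[OF rc_succ1], rule rc_proj, simp, rule rc_tri, rule rc_proj, simp)
  have "rc 1 (\<lambda>xs. LEAST y. (\<lambda>ys. Suc (ys ! 1) - triangle (ys ! 0)) (y # xs) = 0)"
  proof (rule rc_mu)
    show "rc (Suc 1) (\<lambda>ys. Suc (ys ! 1) - triangle (ys ! 0))" using F by (simp add: numeral_2_eq_2)
    fix xs :: "nat list"
    show "\<exists>y. (\<lambda>ys. Suc (ys ! 1) - triangle (ys ! 0)) (y # xs) = 0"
      using triangle_ge[of "Suc (xs ! 0)"] by (intro exI[of _ "Suc (xs ! 0)"]) simp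
  qed
  then show ?thesis by (rule rc_cong) (auto simp: s1_def)
qed

lemma rc_fstd: "rc k F \<Longrightarrow> rc k (\<lambda>xs. fstd (F xs))"
proof -
  have "rc 1 (\<lambda>xs. xs ! 0 - triangle (s1 (xs ! 0) - 1))"
    by (rule rc_sub, rule rc_proj, simp, rule rc_tri, rule rc_sub, rule rc_comp1[OF rc_s1],
        rule rc_proj, simp, rule rc_const)
  then have "rc 1 (\<lambda>xs. fstd (xs ! 0))" by (rule rc_cong) (auto simp: fstd_def)
  then show "rc k F \<Longrightarrow> rc k (\<lambda>xs. fstd (F xs))" by (rule rc_comp1)
qed

lemma rc_sndd: "rc k F \<Longrightarrow> rc k (\<lambda>xs. sndd (F xs))"
proof -
  have "rc 1 (\<lambda>xs. (s1 (xs ! 0) - 1) - fstd (xs ! 0))"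
    by (rule rc_sub, rule rc_sub, rule rc_comp1[OF rc_s1],
        rule rc_proj, simp, rule rc_const, rule rc_fstd, rule rc_proj, simp)
  then have "rc 1 (\<lambda>xs. sndd (xs ! 0))" by (rule rc_cong) (auto simp: sndd_def)
  then show "rc k F \<Longrightarrow> rc k (\<lambda>xs. sndd (F xs))" by (rule rc_comp1)
qed

lemma rc_Nq: "rc 2 (\<lambda>xs. Nq (xs ! 0) (xs ! 1))"
proof -
  have F: "rc 3 (\<lambda>ys. ys ! 1 * (Suc (ys ! 2) - ys ! 1 * Suc (ys ! 0)))"
    by (rule rc_mult, rule rc_proj, simp, rule rc_sub, rule rc_comp1[OF rc_succ1], rule rc_proj, simp,
        rule rc_mult, rule rc_proj, simp, rule rc_comp1[OF rc_succ1], rule rc_proj, simp)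
  have "rc 2 (\<lambda>xs. LEAST y. (\<lambda>ys. ys ! 1 * (Suc (ys ! 2) - ys ! 1 * Suc (ys ! 0))) (y # xs) = 0)"
  proof (rule rc_mu)
    show "rc (Suc 2) (\<lambda>ys. ys ! 1 * (Suc (ys ! 2) - ys ! 1 * Suc (ys ! 0)))" using F by simp
    fix xs :: "nat list"
    show "\<exists>y. (\<lambda>ys. ys ! 1 * (Suc (ys ! 2) - ys ! 1 * Suc (ys ! 0))) (y # xs) = 0"
      by (intro exI[of _ "xs ! 1"]) (cases "xs ! 0", auto)
  qed
  then show ?thesis by (rule rc_cong) (auto simp: Nq_def numeral_2_eq_2)
qed

lemma rc_TT: assumes "computable_set R" "infinite R" shows "rc k F \<Longrightarrow> rc k (\<lambda>xs. TT R (F xs))"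
proof -
  have F: "rc 2 (\<lambda>ys. Suc (ys ! 1) - card (R \<inter> {..< ys ! 0}))"
    by (rule rc_sub, rule rc_comp1[OF rc_succ1], rule rc_proj, simp, rule rc_cnt[OF assms(1)], rule rc_proj, simp)
  have "rc 1 (\<lambda>xs. LEAST y. (\<lambda>ys. Suc (ys ! 1) - card (R \<inter> {..< ys ! 0})) (y # xs) = 0)"
  proof (rule rc_mu)
    show "rc (Suc 1) (\<lambda>ys. Suc (ys ! 1) - card (R \<inter> {..< ys ! 0}))" using F by (simp add: numeral_2_eq_2)
    fix xs :: "nat list"
    obtain t where "xs ! 0 < cnt R t" using cnt_unbounded[OF assms(2)] by blast
    then show "\<exists>y. (\<lambda>ys. Suc (ys ! 1) - card (R \<inter> {..< ys ! 0})) (y # xs) = 0"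
      by (intro exI[of _ t]) (simp add: cnt_def)
  qed
  then have "rc 1 (\<lambda>xs. TT R (xs ! 0))" by (rule rc_cong) (auto simp: TT_def cnt_def)
  then show "rc k F \<Longrightarrow> rc k (\<lambda>xs. TT R (F xs))" by (rule rc_comp1)
qed

lemma computable_g:
  assumes "computable_set R" "infinite R"
  shows "computable_rat_fun (\<lambda>\<epsilon>. C * 2 ^ TT R (nat \<lfloor>1 / \<epsilon>\<rfloor>))"
proof -
  define h where "h z = C * 2 ^ TT R (Nq (fstd z) (sndd z))" for z
  have "rc 1 (\<lambda>xs. C * 2 ^ TT R (Nq (fstd (xs ! 0)) (sndd (xs ! 0))))"
    by (rule rc_mult, rule rc_const, rule rc_pow2, rule rc_TT[OF assms],
        rule rc_comp2[OF rc_Nq], rule rc_fstd, rule rc_proj, simp, rule rc_sndd, rule rc_proj, simp)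
  then obtain c where c: "\<forall>xs. length xs = 1 \<longrightarrow> eval c xs (C * 2 ^ TT R (Nq (fstd (xs ! 0)) (sndd (xs ! 0))))"
    unfolding rc_def by blast
  have "eval c [x] (h x)" for x using c[rule_format, of "[x]"] by (simp add: h_def)
  then have "computable h" unfolding computable_def by blast
  moreover have "C * 2 ^ TT R (nat \<lfloor>1 / (of_nat a / of_nat b :: rat)\<rfloor>) = h (prod_encode (a, b))" for a b
    by (simp add: h_def dec_enc Nq_eq)
  ultimately show ?thesis unfolding computable_rat_fun_def by blast
qed



lemma cost_bound:
  fixes r :: "nat \<Rightarrow> rat" and \<epsilon> :: rat
  assumes sm: "strict_mono r" and R: "infinite R" and eps: "\<epsilon> > 0"
    and ns: "n < s" and cost: "cost_OmegaR r R n s \<ge> real_of_rat \<epsilon>"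
  shows "1 < real_of_rat (r s - r n) * 2 ^ TT R (nat \<lfloor>1 / \<epsilon>\<rfloor>)"
proof -
  define N where "N = nat \<lfloor>1 / \<epsilon>\<rfloor>"
  define t where "t = TT R N"
  define k where "k = kfun r n s"
  define c where "c = card (R \<inter> {..< nat k})"
  define D where "D = real_of_rat (r s - r n)"
  have Dpos: "D > 0" using sm ns unfolding D_def strict_mono_def by simp
  have "real_of_rat \<epsilon> \<le> (1/2) ^ c" using cost unfolding cost_OmegaR_def c_def k_def .
  then have "real_of_rat \<epsilon> * 2 ^ c \<le> 1" by (simp add: power_one_over field_simps)
  then have "real_of_rat (\<epsilon> * 2 ^ c) \<le> real_of_rat 1" by (simp add: of_rat_mult of_rat_power)
  then have "\<epsilon> * 2 ^ c \<le> 1" using of_rat_less_eq by blast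
  then have "2 ^ c \<le> 1 / \<epsilon>" using eps by (simp add: field_simps)
  then have "of_int (2 ^ c) \<le> 1 / \<epsilon>" by simp
  then have "2 ^ c \<le> \<lfloor>1 / \<epsilon>\<rfloor>" by (simp only: le_floor_iff)
  then have "int (2 ^ c) \<le> \<lfloor>1 / \<epsilon>\<rfloor>" by simp
  then have "2 ^ c \<le> N" unfolding N_def by (metis nat_int nat_mono)
  then have cN: "c \<le> N" using less_exp[of c] by linarith
  have "nat k < t"
  proof (rule ccontr)
    assume "\<not> nat k < t"
    then have "cnt R t \<le> cnt R (nat k)" by (intro cnt_mono) simp
    then show False using TT_prop[OF R, of N] cN unfolding t_def c_def cnt_def by simp
  qed
  then have "k < int t" by linarith
  then have "- log 2 D < real t" unfolding k_def kfun_def D_def by (simp add: floor_less_iff)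
  then have "- real t < log 2 D" by simp
  then have "2 powr (- real t) < D" using less_log_iff[of 2 D "- real t"] Dpos by simp
  then have "inverse (2 ^ t) < D" by (simp add: powr_minus powr_realpow)
  then show ?thesis using Dpos unfolding D_def t_def N_def by (simp add: field_simps)
qed

lemma sum_bound:
  fixes r :: "nat \<Rightarrow> rat"
  assumes mono: "mono r"
    and a: "\<forall>i<l. ns i < ss i" "\<forall>i. Suc i < l \<longrightarrow> ss i \<le> ns (Suc i)"
  shows "j < l \<Longrightarrow> (\<Sum>i<j. real_of_rat (r (ss i) - r (ns i))) \<le> real_of_rat (r (ns j) - r (ns 0))"
proof (induction j)
  case 0 then show ?case by simp
next
  case (Suc j)
  then have "r (ss j) \<le> r (ns (Suc j))" using a mono by (simp add: monoD)
  then have "real_of_rat (r (ss j)) \<le> real_of_rat (r (ns (Suc j)))" by (simp add: of_rat_less_eq)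
  then show ?case using Suc by (simp add: of_rat_diff)
qed



theorem proposition7p2:
  fixes \<Omega> :: real and \<Omega>s :: "nat \<Rightarrow> rat" and R :: "nat set"
  assumes "ml_random \<Omega>"
    and "left_ce_approx \<Omega>s \<Omega>"
    and "computable_set R"
    and "infinite R"
  shows "benign (cost_OmegaR \<Omega>s R)"
proof -
  have sm: "strict_mono \<Omega>s" and lim: "(\<lambda>s. real_of_rat (\<Omega>s s)) \<longlonglongrightarrow> \<Omega>"
    using assms(2) unfolding left_ce_approx_def by auto
  have mono: "mono \<Omega>s" using sm by (rule strict_mono_mono)
  have inc: "incseq (\<lambda>s. real_of_rat (\<Omega>s s))"
    using mono unfolding mono_def by (simp add: of_rat_less_eq)
  have leO: "real_of_rat (\<Omega>s s) \<le> \<Omega>" for s by (rule incseq_le[OF inc lim])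
  define C where "C = nat \<lceil>\<Omega> - real_of_rat (\<Omega>s 0)\<rceil>"
  have Cge: "\<Omega> - real_of_rat (\<Omega>s 0) \<le> real C" unfolding C_def by (rule real_nat_ceiling_ge)
  show ?thesis unfolding benign_def
  proof (intro exI conjI allI impI)
    show "computable_rat_fun (\<lambda>\<epsilon>. C * 2 ^ TT R (nat \<lfloor>1 / \<epsilon>\<rfloor>))"
      by (rule computable_g[OF assms(3,4)])
    fix \<epsilon> :: rat and l :: nat and ns ss :: "nat \<Rightarrow> nat"
    assume eps: "\<epsilon> > 0"
    assume h: "(\<forall>i<l. ns i < ss i) \<and> (\<forall>i. Suc i < l \<longrightarrow> ss i \<le> ns (Suc i)) \<and>
        (\<forall>i<l. cost_OmegaR \<Omega>s R (ns i) (ss i) \<ge> real_of_rat \<epsilon>)"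
    define t where "t = TT R (nat \<lfloor>1 / \<epsilon>\<rfloor>)"
    define D where "D i = real_of_rat (\<Omega>s (ss i) - \<Omega>s (ns i))" for i
    show "l \<le> C * 2 ^ TT R (nat \<lfloor>1 / \<epsilon>\<rfloor>)"
    proof (cases "l = 0")
      case True then show ?thesis by simp
    next
      case False
      then obtain m where lm: "l = Suc m" by (cases l) auto
      have each: "1 < D i * 2 ^ t" if "i < l" for i
        using cost_bound[OF sm assms(4) eps, of "ns i" "ss i"] h that unfolding D_def t_def by auto
      have "(\<Sum>i<m. D i) \<le> real_of_rat (\<Omega>s (ns m) - \<Omega>s (ns 0))"
        using sum_bound[OF mono, of l ns ss m] h lm unfolding D_def by auto
      then have "(\<Sum>i<l. D i) \<le> real_of_rat (\<Omega>s (ss m)) - real_of_rat (\<Omega>s (ns 0))"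
        unfolding lm D_def by (simp add: of_rat_diff)
      also have "\<dots> \<le> \<Omega> - real_of_rat (\<Omega>s 0)"
      proof -
        have "real_of_rat (\<Omega>s 0) \<le> real_of_rat (\<Omega>s (ns 0))"
          using monoD[OF mono, of 0 "ns 0"] by (simp add: of_rat_less_eq)
        then show ?thesis using leO[of "ss m"] by linarith
      qed
      also have "\<dots> \<le> real C" by (rule Cge)
      finally have S: "(\<Sum>i<l. D i) \<le> real C" .
      have "real l = (\<Sum>i<l. 1::real)" by simp
      also have "\<dots> \<le> (\<Sum>i<l. D i * 2 ^ t)"
        by (rule sum_mono) (use each in \<open>auto intro: less_imp_le\<close>)
      also have "\<dots> = (\<Sum>i<l. D i) * 2 ^ t" by (simp add: sum_distrib_right)
      also have "\<dots> \<le> real C * 2 ^ t" using S by (simp add: mult_right_mono)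
      finally have "real l \<le> real (C * 2 ^ t)" by simp
      then show ?thesis unfolding t_def by (simp only: of_nat_le_iff)
    qed
  qed
qed


end
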